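(* Let $G$ be a stable (causal) LTI system with $m$ inputs and $p$ outputs. With respect to the adjacency relation $\mathrm{Adj}$ below, with $K=\mathrm{diag}(k_1,\dots,k_m)$ and $|k|_2=(\sum_{i=1}^m k_i^2)^{1/2}$, $$\|GK\|_2\le \Delta^{m,p}_2 G\le |k|_2\,\|G\|_2.$$
   Context: Signals are maps $u:\mathbb N\to\mathbb R^m$. For $k=(k_1,\dots,k_m)$ with all $k_i>0$, two input signals $u,u'$ are adjacent, $\mathrm{Adj}(u,u')$, iff for every $i\in\{1,\dots,m\}$ there exist $t_i\in\mathbb N$ and $\alpha_i\in\mathbb R$ with $|\alpha_i|\le k_i$ and $u'_i-u_i=\alpha_i\delta_{t_i}$, where $\delta_{t}$ is the discrete unit impulse at time $t$. The $\ell_2$-sensitivity of a system $G$ with $m$ inputs and $p$ outputs is $\Delta^{m,p}_2 G=\sup_{\mathrm{Adj}(u,u')}\|G(u-u')\|_2$, where $\|v\|_2=(\sum_t |v_t|_2^2)^{1/2}$. The $\mathcal H_2$ norm of an LTI system $G$ with $m$ inputs is $\|G\|_2^2=\sum_{i=1}^m\|G\delta_0e_i\|_2^2=\frac{1}{2\pi}\int_{-\pi}^{\pi}\mathrm{Tr}(G(e^{j\omega})^*G(e^{j\omega}))\,d\omega$, $e_i$ being the standard basis vectors. *)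

theory Defs
  imports "HOL-Analysis.Analysis"
begin

type_synonym ('n) signal = "nat \<Rightarrow> real ^ 'n"

definition lti :: "(nat \<Rightarrow> real ^ 'm::finite ^ 'p) \<Rightarrow> 'm signal \<Rightarrow> 'p signal" where
  "lti H u = (\<lambda>t. \<Sum>s\<le>t. H (t - s) *v u s)"

definition stable_ir :: "(nat \<Rightarrow> real ^ 'm ^ 'p) \<Rightarrow> bool" where
  "stable_ir H \<longleftrightarrow> (\<forall>i j. summable (\<lambda>t. \<bar>H t $ i $ j\<bar>))"

definition delta :: "nat \<Rightarrow> nat \<Rightarrow> real" where
  "delta t = (\<lambda>s. if s = t then 1 else 0)"

definition sig_l2 :: "'n::finite signal \<Rightarrow> real" where
  "sig_l2 v = sqrt (\<Sum>t. (norm (v t))\<^sup>2)"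

definition Adj :: "real ^ 'm::finite \<Rightarrow> 'm signal \<Rightarrow> 'm signal \<Rightarrow> bool" where
  "Adj k u u' \<longleftrightarrow> (\<forall>i. \<exists>t \<alpha>. \<bar>\<alpha>\<bar> \<le> k $ i \<and> (\<lambda>s. u' s $ i - u s $ i) = (\<lambda>s. \<alpha> * delta t s))"

text \<open>l2 sensitivity (extended real, since the supremum could a priori be infinite).\<close>
definition l2_sens :: "real ^ 'm::finite \<Rightarrow> ('m signal \<Rightarrow> 'p::finite signal) \<Rightarrow> ereal" where
  "l2_sens k G = (SUP (u, u') \<in> {(u, u'). Adj k u u'}. ereal (sig_l2 (G (\<lambda>t. u t - u' t))))"

definition H2_norm :: "('m::finite signal \<Rightarrow> 'p::finite signal) \<Rightarrow> real" where
  "H2_norm G = sqrt (\<Sum>i\<in>UNIV. (sig_l2 (G (\<lambda>t. delta 0 t *\<^sub>R axis i 1)))\<^sup>2)"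

definition diag_mat :: "real ^ 'm::finite \<Rightarrow> real ^ 'm ^ 'm" where
  "diag_mat k = (\<chi> i j. if i = j then k $ i else 0)"

end

theory Submission
  imports Defs
begin

definition sqs :: "(nat \<Rightarrow> 'a::real_normed_vector) \<Rightarrow> bool" where
  "sqs f \<longleftrightarrow> summable (\<lambda>t. (norm (f t))\<^sup>2)"

definition QQ :: "(nat \<Rightarrow> 'a::real_normed_vector) \<Rightarrow> real" where
  "QQ f = (\<Sum>t. (norm (f t))\<^sup>2)"

lemma QQ_nonneg: "sqs f \<Longrightarrow> 0 \<le> QQ f"
  unfolding QQ_def sqs_def by (rule suminf_nonneg) auto

lemma sqs_add: assumes "sqs f" "sqs g" shows "sqs (\<lambda>t. f t + g t)"
proof -
  have "summable (\<lambda>t. 2 * (norm (f t))\<^sup>2 + 2 * (norm (g t))\<^sup>2)"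
    using assms unfolding sqs_def by (intro summable_add summable_mult)
  moreover have "norm ((norm (f t + g t))\<^sup>2) \<le> 2 * (norm (f t))\<^sup>2 + 2 * (norm (g t))\<^sup>2" for t
  proof -
    have a: "norm (f t + g t) \<le> norm (f t) + norm (g t)" by (rule norm_triangle_ineq)
    have "(norm (f t + g t))\<^sup>2 \<le> (norm (f t) + norm (g t))\<^sup>2"
      using a by (simp add: power_mono)
    also have "\<dots> \<le> 2 * (norm (f t))\<^sup>2 + 2 * (norm (g t))\<^sup>2"
      by (smt (verit) sum_squares_bound power2_sum)
    finally show ?thesis by simp
  qed
  ultimately show ?thesis unfolding sqs_def by (rule summable_comparison_test'[where N=0]) 
qed

lemma sqs_scale: "sqs f \<Longrightarrow> sqs (\<lambda>t. c *\<^sub>R f t)"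
  unfolding sqs_def by (simp add: power_mult_distrib summable_mult)

lemma QQ_scale: "sqs f \<Longrightarrow> QQ (\<lambda>t. c *\<^sub>R f t) = c\<^sup>2 * QQ f"
  unfolding sqs_def QQ_def by (simp add: power_mult_distrib suminf_mult)

lemma sqs_sum: "finite I \<Longrightarrow> (\<And>i. i \<in> I \<Longrightarrow> sqs (f i)) \<Longrightarrow> sqs (\<lambda>t. \<Sum>i\<in>I. f i t)"
proof (induction I rule: finite_induct)
  case empty then show ?case by (simp add: sqs_def)
next
  case (insert x F) then show ?case by (simp add: sqs_add)
qed

lemma QQ_triangle: assumes "sqs f" "sqs g"
  shows "sqrt (QQ (\<lambda>t. f t + g t)) \<le> sqrt (QQ f) + sqrt (QQ g)"
proof -
  have part: "sqrt (\<Sum>t<n. (norm (h t))\<^sup>2) \<le> sqrt (QQ h)" if "sqs h" for h :: "nat \<Rightarrow> 'a" and n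
    using that unfolding sqs_def QQ_def by (intro real_sqrt_le_mono sum_le_suminf) auto
  have "(\<Sum>t<n. (norm (f t + g t))\<^sup>2) \<le> (sqrt (QQ f) + sqrt (QQ g))\<^sup>2" for n
  proof -
    have "sqrt (\<Sum>t<n. (norm (f t + g t))\<^sup>2) = L2_set (\<lambda>t. norm (f t + g t)) {..<n}"
      by (simp add: L2_set_def)
    also have "\<dots> \<le> L2_set (\<lambda>t. norm (f t) + norm (g t)) {..<n}"
      by (rule L2_set_mono) (auto simp: norm_triangle_ineq)
    also have "\<dots> \<le> L2_set (\<lambda>t. norm (f t)) {..<n} + L2_set (\<lambda>t. norm (g t)) {..<n}"
      by (rule L2_set_triangle_ineq)
    also have "\<dots> \<le> sqrt (QQ f) + sqrt (QQ g)"
      using add_mono[OF part[OF assms(1), of n] part[OF assms(2), of n]] unfolding L2_set_def by (simp only: real_norm_def abs_norm_cancel)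
    finally have "sqrt (\<Sum>t<n. (norm (f t + g t))\<^sup>2) \<le> sqrt (QQ f) + sqrt (QQ g)" .
    then show ?thesis by (rule sqrt_le_D)
  qed
  then have "QQ (\<lambda>t. f t + g t) \<le> (sqrt (QQ f) + sqrt (QQ g))\<^sup>2"
    unfolding QQ_def using sqs_add[OF assms] unfolding sqs_def by (intro suminf_le_const) auto
  then show ?thesis
    using QQ_nonneg[OF assms(1)] QQ_nonneg[OF assms(2)] by (intro real_le_lsqrt) auto
qed

lemma QQ_sum_triangle: "finite I \<Longrightarrow> (\<And>i. i \<in> I \<Longrightarrow> sqs (f i)) \<Longrightarrow>
   sqrt (QQ (\<lambda>t. \<Sum>i\<in>I. f i t)) \<le> (\<Sum>i\<in>I. sqrt (QQ (f i)))"
proof (induction I rule: finite_induct)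
  case empty then show ?case by (simp add: QQ_def)
next
  case (insert x F)
  have "sqrt (QQ (\<lambda>t. f x t + (\<Sum>i\<in>F. f i t))) \<le> sqrt (QQ (f x)) + sqrt (QQ (\<lambda>t. \<Sum>i\<in>F. f i t))"
    using insert by (intro QQ_triangle sqs_sum) auto
  also have "\<dots> \<le> sqrt (QQ (f x)) + (\<Sum>i\<in>F. sqrt (QQ (f i)))"
    using insert by simp
  finally show ?case using insert by simp
qed

lemma parallelogram_pt: "(norm (a + b))\<^sup>2 + (norm (a - b))\<^sup>2 = 2 * (norm a)\<^sup>2 + 2 * (norm (b::'a::real_inner))\<^sup>2"
  by (simp add: power2_norm_eq_inner inner_add_left inner_add_right inner_diff_left inner_diff_right inner_commute)

lemma sqs_diff: "sqs f \<Longrightarrow> sqs g \<Longrightarrow> sqs (\<lambda>t. f t - g t)"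
  using sqs_add[of f "\<lambda>t. (-1) *\<^sub>R g t"] sqs_scale[of g "-1"] by simp

lemma QQ_parallelogram:
  fixes f g :: "nat \<Rightarrow> 'a::real_inner"
  assumes "sqs f" "sqs g"
  shows "QQ (\<lambda>t. f t + g t) + QQ (\<lambda>t. f t - g t) = 2 * QQ f + 2 * QQ g"
proof -
  have "QQ (\<lambda>t. f t + g t) + QQ (\<lambda>t. f t - g t) = (\<Sum>t. (norm (f t + g t))\<^sup>2 + (norm (f t - g t))\<^sup>2)"
    unfolding QQ_def using sqs_add[OF assms] sqs_diff[OF assms] unfolding sqs_def by (rule suminf_add)
  also have "\<dots> = (\<Sum>t. 2 * (norm (f t))\<^sup>2 + 2 * (norm (g t))\<^sup>2)"
    by (simp add: parallelogram_pt)
  also have "\<dots> = 2 * QQ f + 2 * QQ g"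
    using assms unfolding sqs_def QQ_def
    by (subst suminf_add[symmetric]) (auto intro: summable_mult simp: suminf_mult)
  finally show ?thesis .
qed

lemma sign_choice:
  fixes f :: "'i \<Rightarrow> nat \<Rightarrow> 'a::real_inner"
  shows "finite I \<Longrightarrow> (\<And>i. i \<in> I \<Longrightarrow> sqs (f i)) \<Longrightarrow>
    \<exists>e. (\<forall>i. e i = 1 \<or> e i = -1) \<and> (\<Sum>i\<in>I. QQ (f i)) \<le> QQ (\<lambda>t. \<Sum>i\<in>I. e i *\<^sub>R f i t)"
proof (induction I rule: finite_induct)
  case empty then show ?case by (intro exI[of _ "\<lambda>_. 1"]) (simp add: QQ_def)
next
  case (insert x F)
  then obtain e where e: "\<forall>i. e i = 1 \<or> e i = -1" "(\<Sum>i\<in>F. QQ (f i)) \<le> QQ (\<lambda>t. \<Sum>i\<in>F. e i *\<^sub>R f i t)"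
    by auto
  define y where "y = (\<lambda>t. \<Sum>i\<in>F. e i *\<^sub>R f i t)"
  have sy: "sqs y" unfolding y_def using insert by (intro sqs_sum sqs_scale) auto
  have sx: "sqs (f x)" using insert by auto
  have par: "QQ (\<lambda>t. y t + f x t) + QQ (\<lambda>t. y t - f x t) = 2 * QQ y + 2 * QQ (f x)"
    by (rule QQ_parallelogram[OF sy sx])
  have sumeq: "(\<Sum>i\<in>insert x F. (e(x:=c)) i *\<^sub>R f i t) = c *\<^sub>R f x t + y t" for c t
  proof -
    have "(\<Sum>i\<in>F. (e(x:=c)) i *\<^sub>R f i t) = y t"
      unfolding y_def using insert(2) by (intro sum.cong) auto
    then show ?thesis using insert(1,2) by simp
  qed
  have lhs: "(\<Sum>i\<in>insert x F. QQ (f i)) = QQ (f x) + (\<Sum>i\<in>F. QQ (f i))"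
    using insert(1,2) by simp
  show ?case
  proof (cases "QQ (\<lambda>t. y t + f x t) \<ge> QQ y + QQ (f x)")
    case True
    have "(\<lambda>t. \<Sum>i\<in>insert x F. (e(x:=1)) i *\<^sub>R f i t) = (\<lambda>t. y t + f x t)"
      using sumeq[of 1] by (auto simp: algebra_simps)
    then show ?thesis using True e lhs unfolding y_def
      by (intro exI[of _ "e(x:=1)"]) auto
  next
    case False
    then have F2: "QQ (\<lambda>t. y t - f x t) \<ge> QQ y + QQ (f x)" using par by linarith
    have "(\<lambda>t. \<Sum>i\<in>insert x F. (e(x:=-1)) i *\<^sub>R f i t) = (\<lambda>t. y t - f x t)"
      using sumeq[of "-1"] by (auto simp: algebra_simps)
    then show ?thesis using F2 e lhs unfolding y_def
      by (intro exI[of _ "e(x:=-1)"]) auto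
  qed
qed

lemma mv_expand: "(A::real^'m::finite^'p::finite) *v v = (\<Sum>i\<in>UNIV. (v$i) *\<^sub>R (A *v axis i 1))"
  by (simp add: vec_eq_iff matrix_vector_mult_def axis_def sum_component if_distrib mult.commute cong: if_cong)

lemma col_comp: "((A::real^'m::finite^'p::finite) *v axis i 1) $ p = A $ p $ i"
  by (simp add: matrix_vector_mult_basis column_def)

lemma lti_impulse: "lti H (\<lambda>s. delta t0 s *\<^sub>R v) t = (if t0 \<le> t then H (t - t0) *v v else 0)"
proof -
  have "lti H (\<lambda>s. delta t0 s *\<^sub>R v) t = (\<Sum>s\<in>{..t}. if s = t0 then H (t - s) *v v else 0)"
    unfolding lti_def delta_def by (intro sum.cong) auto
  also have "\<dots> = (if t0 \<le> t then H (t - t0) *v v else 0)"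
    by (simp add: sum.delta')
  finally show ?thesis .
qed

lemma mv_sum: "finite I \<Longrightarrow> (A::real^'m::finite^'p::finite) *v (\<Sum>i\<in>I. x i) = (\<Sum>i\<in>I. A *v x i)"
  by (induction I rule: finite_induct) (auto simp: matrix_vector_right_distrib)

lemma lti_sum: "finite I \<Longrightarrow> lti H (\<lambda>s. \<Sum>i\<in>I. u i s) t = (\<Sum>i\<in>I. lti H (u i) t)"
  unfolding lti_def by (simp add: mv_sum sum.swap[of _ I])

lemma shift_sums:
  fixes f :: "nat \<Rightarrow> 'a::real_normed_vector"
  assumes "sqs f"
  shows "(\<lambda>t. (norm (if t0 \<le> t then f (t - t0) else 0))\<^sup>2) sums QQ f"
proof -
  let ?F = "\<lambda>t. (norm (if t0 \<le> t then f (t - t0) else 0))\<^sup>2"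
  have "(\<lambda>t. (norm (f t))\<^sup>2) sums QQ f" using assms unfolding sqs_def QQ_def by (rule summable_sums)
  moreover have "(\<lambda>i. ?F (i + t0)) = (\<lambda>t. (norm (f t))\<^sup>2)" by auto
  ultimately have "(\<lambda>i. ?F (i + t0)) sums QQ f" by simp
  then have "?F sums (QQ f + (\<Sum>i<t0. ?F i))" by (rule sums_iff_shift[THEN iffD1])
  moreover have "(\<Sum>i<t0. ?F i) = 0" by (intro sum.neutral) auto
  ultimately show ?thesis by simp
qed

lemma sqs_shift: assumes "sqs f" shows "sqs (\<lambda>t. if t0 \<le> t then f (t - t0) else 0)"
  unfolding sqs_def[of "\<lambda>t. if t0 \<le> t then f (t - t0) else 0"] by (rule sums_summable[OF shift_sums[OF assms]])

lemma QQ_shift: assumes "sqs f" shows "QQ (\<lambda>t. if t0 \<le> t then f (t - t0) else 0) = QQ f"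
proof -
  have "(\<lambda>t. (norm (if t0 \<le> t then f (t - t0) else 0))\<^sup>2) sums QQ f" by (rule shift_sums[OF assms])
  then show ?thesis unfolding QQ_def[of "\<lambda>t. if t0 \<le> t then f (t - t0) else 0"] by (rule sums_unique[symmetric])
qed

lemma abs_summable_sq:
  fixes S :: "nat \<Rightarrow> real"
  assumes "summable S" "\<And>t. 0 \<le> S t"
  shows "summable (\<lambda>t. (S t)\<^sup>2)"
proof -
  have "S \<longlonglongrightarrow> 0" using assms(1) by (rule summable_LIMSEQ_zero)
  then obtain N where N: "\<And>n. n \<ge> N \<Longrightarrow> norm (S n - 0) < 1" using LIMSEQ_D[of S 0 1] by auto
  show ?thesis
  proof (rule summable_comparison_test'[OF assms(1), of N])
    fix n assume "N \<le> n"
    then have "S n < 1" "0 \<le> S n" using N[of n] assms(2)[of n] by auto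
    then show "norm ((S n)\<^sup>2) \<le> S n" by (simp add: power2_eq_square mult_left_le)
  qed
qed

lemma sqs_col:
  fixes H :: "nat \<Rightarrow> real ^ 'm::finite ^ 'p::finite"
  assumes "stable_ir H"
  shows "sqs (\<lambda>t. H t *v axis i 1)"
proof -
  define S where "S t = (\<Sum>p\<in>UNIV. \<bar>H t $ p $ i\<bar>)" for t
  have "summable S" unfolding S_def using assms unfolding stable_ir_def by (intro summable_sum) auto
  then have sS: "summable (\<lambda>t. (S t)\<^sup>2)" by (rule abs_summable_sq) (simp add: S_def sum_nonneg)
  have "norm ((norm (H t *v axis i 1))\<^sup>2) \<le> (S t)\<^sup>2" for t
  proof -
    have "norm (H t *v axis i 1) \<le> S t" unfolding S_def
      using norm_le_l1_cart[of "H t *v axis i 1"] by (simp add: col_comp)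
    then show ?thesis by (simp add: power_mono)
  qed
  then show ?thesis unfolding sqs_def by (rule summable_comparison_test'[OF sS, of 0])
qed

lemma mv_neg: "(A::real^'m::finite^'p::finite) *v (- x) = - (A *v x)"
  by (simp add: vec_eq_iff matrix_vector_mult_def sum_negf)

lemma sig_l2_QQ: "sig_l2 f = sqrt (QQ f)"
  by (simp add: sig_l2_def QQ_def)

lemma diag_comp: "(diag_mat k *v x) $ j = k$j * x$j"
proof -
  have "(diag_mat k *v x) $ j = (\<Sum>l\<in>UNIV. (if j = l then k$j else 0) * x$l)"
    by (simp add: matrix_vector_mult_def diag_mat_def)
  also have "\<dots> = (\<Sum>l\<in>UNIV. if l = j then k$j * x$l else 0)"
    by (rule sum.cong) auto
  finally have "(diag_mat k *v x) $ j = (\<Sum>l\<in>UNIV. if l = j then k$j * x$l else 0)" .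
  then show ?thesis by simp
qed

lemma diag_axis: "diag_mat k *v (c *\<^sub>R axis i 1) = (c * k$i) *\<^sub>R axis i (1::real)"
  by (auto simp: vec_eq_iff diag_comp axis_def)

lemma norm_vec_L2: "norm (k::real^'m::finite) = L2_set (\<lambda>i. k$i) UNIV"
  by (simp add: norm_vec_def L2_set_def)

theorem theorem4:
  fixes H :: "nat \<Rightarrow> real ^ 'm ^ 'p" and k :: "real ^ 'm"
  assumes "stable_ir H"
    and "\<forall>i. k $ i > 0"
  shows "ereal (H2_norm (\<lambda>u. lti H (\<lambda>t. diag_mat k *v u t))) \<le> l2_sens k (lti H)
       \<and> l2_sens k (lti H) \<le> ereal (norm k * H2_norm (lti H))"
proof
  define col where "col i = (\<lambda>t. H t *v axis i (1::real))" for i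
  have scol: "sqs (col i)" for i unfolding col_def by (rule sqs_col[OF assms(1)])
  define f where "f i = (\<lambda>t. k$i *\<^sub>R col i t)" for i
  have sf: "sqs (f i)" for i unfolding f_def by (rule sqs_scale[OF scol])
  have GK: "H2_norm (\<lambda>u. lti H (\<lambda>t. diag_mat k *v u t)) = sqrt (\<Sum>i\<in>UNIV. QQ (f i))"
  proof -
    have "lti H (\<lambda>t. diag_mat k *v (delta 0 t *\<^sub>R axis i 1)) = f i" for i
    proof -
      have "lti H (\<lambda>t. diag_mat k *v (delta 0 t *\<^sub>R axis i 1)) = lti H (\<lambda>t. delta 0 t *\<^sub>R (k$i *\<^sub>R axis i 1))"
        by (simp add: diag_axis mult.commute)
      also have "\<dots> = f i"
        by (rule ext, subst lti_impulse) (simp add: f_def col_def matrix_vector_mult_scaleR)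
      finally show ?thesis .
    qed
    then show ?thesis unfolding H2_norm_def sig_l2_QQ using QQ_nonneg[OF sf] by simp
  qed
  have G: "H2_norm (lti H) = L2_set (\<lambda>i. sqrt (QQ (col i))) UNIV"
  proof -
    have "lti H (\<lambda>t. delta 0 t *\<^sub>R axis i 1) = col i" for i
      by (rule ext, subst lti_impulse) (simp add: col_def)
    then show ?thesis unfolding H2_norm_def sig_l2_QQ L2_set_def by simp
  qed
  show "ereal (H2_norm (\<lambda>u. lti H (\<lambda>t. diag_mat k *v u t))) \<le> l2_sens k (lti H)"
  proof -
    obtain e where e: "\<forall>i. e i = 1 \<or> e i = -1" "(\<Sum>i\<in>UNIV. QQ (f i)) \<le> QQ (\<lambda>t. \<Sum>i\<in>UNIV. e i *\<^sub>R f i t)"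
      using sign_choice[of UNIV f] sf by auto
    define v where "v = (\<chi> i. e i * k$i)"
    define u :: "'m signal" where "u = (\<lambda>s. 0)"
    define u' :: "'m signal" where "u' = (\<lambda>s. (- delta 0 s) *\<^sub>R v)"
    have adj: "Adj k u u'" unfolding Adj_def
    proof
      fix i
      have "\<bar>- (e i * k$i)\<bar> \<le> k $ i" using e(1) assms(2) by (metis abs_minus_cancel abs_mult abs_of_pos mult_cancel_right1 abs_one abs_neg_one order_refl)
      moreover have "(\<lambda>s. u' s $ i - u s $ i) = (\<lambda>s. (- (e i * k$i)) * delta 0 s)"
        by (auto simp: u_def u'_def v_def)
      ultimately show "\<exists>t \<alpha>. \<bar>\<alpha>\<bar> \<le> k $ i \<and> (\<lambda>s. u' s $ i - u s $ i) = (\<lambda>s. \<alpha> * delta t s)" by blast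
    qed
    have diff: "(\<lambda>t. u t - u' t) = (\<lambda>t. delta 0 t *\<^sub>R v)" by (auto simp: u_def u'_def)
    have out: "lti H (\<lambda>t. u t - u' t) = (\<lambda>t. \<Sum>i\<in>UNIV. e i *\<^sub>R f i t)"
    proof
      fix t
      have "lti H (\<lambda>t. u t - u' t) t = H t *v v" unfolding diff by (subst lti_impulse) simp
      also have "\<dots> = (\<Sum>i\<in>UNIV. e i *\<^sub>R f i t)"
        by (subst mv_expand) (simp add: v_def f_def col_def)
      finally show "lti H (\<lambda>t. u t - u' t) t = (\<Sum>i\<in>UNIV. e i *\<^sub>R f i t)" .
    qed
    have "H2_norm (\<lambda>u. lti H (\<lambda>t. diag_mat k *v u t)) \<le> sig_l2 (lti H (\<lambda>t. u t - u' t))"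
      unfolding GK out sig_l2_QQ using e(2) by simp
    then show ?thesis unfolding l2_sens_def
      using adj by (intro SUP_upper2[of "(u, u')"]) auto
  qed
  show "l2_sens k (lti H) \<le> ereal (norm k * H2_norm (lti H))"
    unfolding l2_sens_def
  proof (rule SUP_least, clarify)
    fix u u' :: "'m signal"
    assume "Adj k u u'"
    then have "\<forall>i. \<exists>p. \<bar>snd p\<bar> \<le> k $ i \<and> (\<lambda>s. u' s $ i - u s $ i) = (\<lambda>s. snd p * delta (fst p) s)"
      unfolding Adj_def by auto
    then obtain P where P: "\<And>i. \<bar>snd (P i)\<bar> \<le> k $ i" "\<And>i. (\<lambda>s. u' s $ i - u s $ i) = (\<lambda>s. snd (P i) * delta (fst (P i)) s)"
      by metis
    define T where "T i = fst (P i)" for i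
    define A where "A i = snd (P i)" for i
    have A: "\<bar>A i\<bar> \<le> k $ i" for i using P(1) unfolding A_def by simp
    have diff: "(\<lambda>s. u s - u' s) = (\<lambda>s. \<Sum>i\<in>UNIV. delta (T i) s *\<^sub>R ((- A i) *\<^sub>R axis i 1))"
    proof (rule ext)
      fix s
      show "u s - u' s = (\<Sum>i\<in>UNIV. delta (T i) s *\<^sub>R ((- A i) *\<^sub>R axis i 1))"
      proof (subst vec_eq_iff, rule allI)
        fix j
        have "u' s $ j - u s $ j = A j * delta (T j) s" using fun_cong[OF P(2)[of j], of s] unfolding A_def T_def by simp
        then show "(u s - u' s) $ j = (\<Sum>i\<in>UNIV. delta (T i) s *\<^sub>R ((- A i) *\<^sub>R axis i 1)) $ j"
          by (simp add: sum_component axis_def if_distrib cong: if_cong) (smt (verit) mult.commute)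
      qed
    qed
    define g where "g i = (\<lambda>t. (- A i) *\<^sub>R (if T i \<le> t then col i (t - T i) else 0))" for i
    have sg: "sqs (g i)" for i unfolding g_def by (intro sqs_scale sqs_shift scol)
    have Qg: "QQ (g i) = (A i)\<^sup>2 * QQ (col i)" for i
      unfolding g_def by (subst QQ_scale[OF sqs_shift[OF scol]]) (simp add: QQ_shift[OF scol])
    have out: "lti H (\<lambda>s. u s - u' s) = (\<lambda>t. \<Sum>i\<in>UNIV. g i t)"
    proof
      fix t
      show "lti H (\<lambda>s. u s - u' s) t = (\<Sum>i\<in>UNIV. g i t)"
        unfolding diff
        by (subst lti_sum, simp, rule sum.cong[OF refl], subst lti_impulse)
          (simp add: g_def col_def matrix_vector_mult_scaleR mv_neg)
    qed
    have "sig_l2 (lti H (\<lambda>s. u s - u' s)) \<le> (\<Sum>i\<in>UNIV. sqrt (QQ (g i)))"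
      unfolding out sig_l2_QQ by (rule QQ_sum_triangle) (auto simp: sg)
    also have "\<dots> = (\<Sum>i\<in>UNIV. \<bar>A i\<bar> * sqrt (QQ (col i)))"
      by (simp add: Qg real_sqrt_mult)
    also have "\<dots> \<le> (\<Sum>i\<in>UNIV. \<bar>k $ i\<bar> * \<bar>sqrt (QQ (col i))\<bar>)"
    proof (rule sum_mono)
      fix i
      have "\<bar>A i\<bar> \<le> \<bar>k $ i\<bar>" using A[of i] by linarith
      then show "\<bar>A i\<bar> * sqrt (QQ (col i)) \<le> \<bar>k $ i\<bar> * \<bar>sqrt (QQ (col i))\<bar>"
        using QQ_nonneg[OF scol, of i] by (simp add: mult_right_mono)
    qed
    also have "\<dots> \<le> L2_set (\<lambda>i. k$i) UNIV * L2_set (\<lambda>i. sqrt (QQ (col i))) UNIV"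
      by (rule L2_set_mult_ineq)
    also have "\<dots> = norm k * H2_norm (lti H)" by (simp add: norm_vec_L2 G)
    finally show "ereal (sig_l2 (lti H (\<lambda>t. u t - u' t))) \<le> ereal (norm k * H2_norm (lti H))" by simp
  qed
qed

end
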